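(* Let $\mathbb{X}$ be an infinite-dimensional (real or complex) Banach space and let $\mathcal{B}=(\mathbf{e}_n)_{n=1}^\infty$ be a semi-normalized quasi-greedy basis of $\mathbb{X}$. Then $C_w=1$ (i.e. $\|\mathcal{G}_N(x)\|\le\|x\|$ for every $x\in\mathbb{X}$, every $N\in\mathbb{N}$ and every choice of greedy set $\Lambda_N(x)$) if and only if $\mathcal{B}$ is unconditional with suppression unconditional constant $K_{su}=1$ (i.e. $\|P_A(x)\|\le\|x\|$ for every $x\in\mathbb{X}$ and every $A\subseteq\mathbb{N}$).
   Context: A basis $(\mathbf{e}_n)_{n=1}^\infty$ of a Banach space $\mathbb{X}$ is a Schauder basis; it is semi-normalized if $0<\inf_n\|\mathbf{e}_n\|\le\sup_n\|\mathbf{e}_n\|<\infty$. Let $(\mathbf{e}_n^* )_{n=1}^\infty$ be the biorthogonal (coordinate) functionals, so $x=\sum_n \mathbf{e}_n^*(x)\mathbf{e}_n$. For $x\in\mathbb{X}$ and $N\in\mathbb{N}$, a greedy set $\Lambda_N(x)$ is any set of $N$ indices with $\min\{|\mathbf{e}_j^*(x)|: j\in\Lambda_N(x)\}\ge\max\{|\mathbf{e}_j^*(x)|: j\notin\Lambda_N(x)\}$, and the greedy operator is $\mathcal{G}_N(x)=\sum_{j\in\Lambda_N(x)}\mathbf{e}_j^*(x)\mathbf{e}_j$. The basis is quasi-greedy if there is a constant $C$ with $\|\mathcal{G}_N(x)\|\le C\|x\|$ for all $x$, $N$ and all choices of greedy sets; $C_w$ denotes the smallest such $C$, and $C_t$ denotes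 the smallest constant $\tilde C$ with $\|x-\mathcal{G}_N(x)\|\le\tilde C\|x\|$ for all $x$, $N$ and choices of greedy sets. For $A\subseteq\mathbb{N}$, $P_A(x)=\sum_{n\in A}\mathbf{e}_n^*(x)\mathbf{e}_n$. The basis is unconditional if every expansion $\sum_n\mathbf{e}_n^*(x)\mathbf{e}_n$ converges to $x$ in any order; equivalently the $P_A$ are uniformly bounded, and the suppression unconditional constant $K_{su}$ is the smallest $K$ with $\|P_A(x)\|\le K\|x\|$ for all $x\in\mathbb{X}$, $A\subseteq\mathbb{N}$. *)

theory Defs
  imports "HOL-Analysis.Analysis"
begin

text \<open>Scalars: a field 'k (real or complex), acting on a Banach space 'a via sc.
  Basis vectors indexed by nat (starting at 0 instead of 1).\<close>

text \<open>Complex Banach space structure on a (real) Banach type: a complex scalar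
  multiplication compatible with the real one and with the norm.\<close>
definition complex_banach_scale :: "(complex \<Rightarrow> 'a::banach \<Rightarrow> 'a) \<Rightarrow> bool" where
  "complex_banach_scale sc \<longleftrightarrow> vector_space sc
     \<and> (\<forall>c x. norm (sc c x) = norm c * norm x)
     \<and> (\<forall>r x. sc (complex_of_real r) x = scaleR r x)"

definition schauder_basis :: "('k::real_normed_field \<Rightarrow> 'a::banach \<Rightarrow> 'a) \<Rightarrow> (nat \<Rightarrow> 'a) \<Rightarrow> bool" where
  "schauder_basis sc e \<longleftrightarrow>
     (\<forall>x. \<exists>!a. (\<lambda>N. \<Sum>n<N. sc (a n) (e n)) \<longlonglongrightarrow> x)"

definition coord :: "('k::real_normed_field \<Rightarrow> 'a::banach \<Rightarrow> 'a) \<Rightarrow> (nat \<Rightarrow> 'a) \<Rightarrow> nat \<Rightarrow> 'a \<Rightarrow> 'k" where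
  "coord sc e n x = (THE a. (\<lambda>N. \<Sum>m<N. sc (a m) (e m)) \<longlonglongrightarrow> x) n"

definition semi_normalized :: "(nat \<Rightarrow> 'a::real_normed_vector) \<Rightarrow> bool" where
  "semi_normalized e \<longleftrightarrow> (\<exists>c>0. \<forall>n. c \<le> norm (e n)) \<and> (\<exists>C. \<forall>n. norm (e n) \<le> C)"

definition greedy_set :: "('k::real_normed_field \<Rightarrow> 'a::banach \<Rightarrow> 'a) \<Rightarrow> (nat \<Rightarrow> 'a) \<Rightarrow> 'a \<Rightarrow> nat \<Rightarrow> nat set \<Rightarrow> bool" where
  "greedy_set sc e x N A \<longleftrightarrow> finite A \<and> card A = N \<and>
     (\<forall>j\<in>A. \<forall>k. k \<notin> A \<longrightarrow> norm (coord sc e k x) \<le> norm (coord sc e j x))"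

definition greedy_op :: "('k::real_normed_field \<Rightarrow> 'a::banach \<Rightarrow> 'a) \<Rightarrow> (nat \<Rightarrow> 'a) \<Rightarrow> nat set \<Rightarrow> 'a \<Rightarrow> 'a" where
  "greedy_op sc e A x = (\<Sum>j\<in>A. sc (coord sc e j x) (e j))"

definition quasi_greedy :: "('k::real_normed_field \<Rightarrow> 'a::banach \<Rightarrow> 'a) \<Rightarrow> (nat \<Rightarrow> 'a) \<Rightarrow> bool" where
  "quasi_greedy sc e \<longleftrightarrow> (\<exists>C. \<forall>x N A. greedy_set sc e x N A \<longrightarrow> norm (greedy_op sc e A x) \<le> C * norm x)"

definition unconditional_basis :: "('k::real_normed_field \<Rightarrow> 'a::banach \<Rightarrow> 'a) \<Rightarrow> (nat \<Rightarrow> 'a) \<Rightarrow> bool" where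
  "unconditional_basis sc e \<longleftrightarrow> (\<forall>x \<pi>. bij \<pi> \<longrightarrow>
     (\<lambda>N. \<Sum>n<N. sc (coord sc e (\<pi> n) x) (e (\<pi> n))) \<longlonglongrightarrow> x)"

definition coord_proj :: "('k::real_normed_field \<Rightarrow> 'a::banach \<Rightarrow> 'a) \<Rightarrow> (nat \<Rightarrow> 'a) \<Rightarrow> nat set \<Rightarrow> 'a \<Rightarrow> 'a" where
  "coord_proj sc e A x = lim (\<lambda>N. \<Sum>n\<in>A \<inter> {..<N}. sc (coord sc e n x) (e n))"

definition infinite_dimensional :: "('k::real_normed_field \<Rightarrow> 'a::banach \<Rightarrow> 'a) \<Rightarrow> bool" where
  "infinite_dimensional sc \<longleftrightarrow> \<not> (\<exists>B. finite B \<and> module.span sc B = UNIV)"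

definition Cw_one :: "('k::real_normed_field \<Rightarrow> 'a::banach \<Rightarrow> 'a) \<Rightarrow> (nat \<Rightarrow> 'a) \<Rightarrow> bool" where
  "Cw_one sc e \<longleftrightarrow> (\<forall>x N A. greedy_set sc e x N A \<longrightarrow> norm (greedy_op sc e A x) \<le> norm x)"

definition Ksu_one :: "('k::real_normed_field \<Rightarrow> 'a::banach \<Rightarrow> 'a) \<Rightarrow> (nat \<Rightarrow> 'a) \<Rightarrow> bool" where
  "Ksu_one sc e \<longleftrightarrow> unconditional_basis sc e \<and> (\<forall>x A. norm (coord_proj sc e A x) \<le> norm x)"

end

theory Submission
  imports Defs
begin

lemma coord_fin:
  fixes sc :: "'k::real_normed_field \<Rightarrow> 'a::banach \<Rightarrow> 'a"
  assumes vs: "vector_space sc" and sb: "schauder_basis sc e" and F: "finite F"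
  shows "coord sc e n (\<Sum>j\<in>F. sc (a j) (e j)) = (if n \<in> F then a n else 0)"
proof -
  interpret v: vector_space sc by (rule vs)
  define b where "b = (\<lambda>j. if j \<in> F then a j else 0)"
  define y where "y = (\<Sum>j\<in>F. sc (a j) (e j))"
  obtain M where M: "F \<subseteq> {..<M}" using F finite_nat_bounded by blast
  have lim: "(\<lambda>N. \<Sum>m<N. sc (b m) (e m)) \<longlonglongrightarrow> y"
  proof (rule tendsto_eventually)
    show "eventually (\<lambda>N. (\<Sum>m<N. sc (b m) (e m)) = y) sequentially"
      unfolding eventually_sequentially
    proof (intro exI allI impI)
      fix N assume "M \<le> N"
      then have sub: "F \<subseteq> {..<N}" using M by auto
      have "(\<Sum>m<N. sc (b m) (e m)) = (\<Sum>m<N. if m \<in> F then sc (a m) (e m) else 0)"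
        by (rule sum.cong) (auto simp: b_def)
      also have "\<dots> = (\<Sum>m\<in>{..<N} \<inter> F. sc (a m) (e m))"
        by (simp add: sum.inter_restrict)
      also have "{..<N} \<inter> F = F" using sub by auto
      finally show "(\<Sum>m<N. sc (b m) (e m)) = y" by (simp add: y_def)
    qed
  qed
  have ex: "\<exists>!a. (\<lambda>N. \<Sum>n<N. sc (a n) (e n)) \<longlonglongrightarrow> y" using sb unfolding schauder_basis_def by blast
  have "(THE a. (\<lambda>N. \<Sum>m<N. sc (a m) (e m)) \<longlonglongrightarrow> y) = b"
    using the1_equality[OF ex, of b] lim by simp
  then show ?thesis unfolding coord_def y_def[symmetric] by (simp add: b_def)
qed

lemma step:
  fixes sc :: "'k::real_normed_field \<Rightarrow> 'a::banach \<Rightarrow> 'a"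
  assumes vs: "vector_space sc" and rs: "\<forall>r x. sc (of_real r) x = scaleR r x"
    and sb: "schauder_basis sc e" and cw: "Cw_one sc e" and F: "finite F" and k: "k \<notin> F"
  shows "norm (\<Sum>j\<in>F. sc (a j) (e j)) \<le> norm ((\<Sum>j\<in>F. sc (a j) (e j)) + sc c (e k))"
proof -
  interpret v: vector_space sc by (rule vs)
  define x0 where "x0 = (\<Sum>j\<in>F. sc (a j) (e j))"
  define G where "G = {j\<in>F. a j \<noteq> 0}"
  have G: "finite G" "G \<subseteq> F" using F by (auto simp: G_def)
  have x0G: "x0 = (\<Sum>j\<in>G. sc (a j) (e j))"
    unfolding x0_def by (rule sum.mono_neutral_cong_right) (use F G in \<open>auto simp: G_def\<close>)
  define \<delta> where "\<delta> = (if G = {} then 1 else Min ((\<lambda>j. norm (a j)) ` G))"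
  have dpos: "\<delta> > 0"
  proof (cases "G = {}")
    case False
    then show ?thesis unfolding \<delta>_def using G by (auto simp: G_def)
  qed (simp add: \<delta>_def)
  have dle: "\<And>j. j \<in> G \<Longrightarrow> \<delta> \<le> norm (a j)"
    unfolding \<delta>_def using G by auto
  have small: "norm x0 \<le> norm (x0 + sc t (e k))" if t: "norm t \<le> \<delta>" for t
  proof -
    define b where "b = a(k:=t)"
    define y where "y = x0 + sc t (e k)"
    have ysum: "y = (\<Sum>j\<in>insert k F. sc (b j) (e j))"
      unfolding y_def x0_def using F k
      by (simp add: b_def add.commute cong: sum.cong) (rule sum.cong, auto)
    have cy: "coord sc e m y = (if m \<in> insert k F then b m else 0)" for m
      unfolding ysum by (rule coord_fin[OF vs sb]) (use F in simp)
    have gs: "greedy_set sc e y (card G) G"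
      unfolding greedy_set_def
    proof (intro conjI ballI allI impI)
      fix j m assume j: "j \<in> G" and m: "m \<notin> G"
      have cj: "coord sc e j y = a j" using j G k cy[of j] by (auto simp: b_def)
      have "norm (coord sc e m y) \<le> \<delta>"
      proof (cases "m = k")
        case True then show ?thesis using cy[of m] t by (simp add: b_def)
      next
        case False then show ?thesis using cy[of m] m dpos by (auto simp: b_def G_def)
      qed
      then show "norm (coord sc e m y) \<le> norm (coord sc e j y)" using cj dle[OF j] by simp
    qed (use G in auto)
    have "greedy_op sc e G y = x0"
      unfolding greedy_op_def x0G
      by (rule sum.cong) (use G k cy in \<open>auto simp: b_def\<close>)
    then show ?thesis using cw gs unfolding Cw_one_def y_def by metis
  qed
  show ?thesis
  proof (cases "c = 0")
    case True then show ?thesis by (simp add: x0_def[symmetric])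
  next
    case False
    define s where "s = min 1 (\<delta> / norm c)"
    have s: "0 < s" "s \<le> 1" "s * norm c \<le> \<delta>" using False dpos
      by (auto simp: s_def min_def field_simps)
    define w where "w = sc c (e k)"
    have "sc (of_real s * c) (e k) = scaleR s w"
      unfolding w_def using rs by (simp flip: v.scale_scale)
    then have "norm x0 \<le> norm (x0 + scaleR s w)"
      using small[of "of_real s * c"] s by (simp add: norm_mult)
    also have "x0 + scaleR s w = scaleR (1 - s) x0 + scaleR s (x0 + w)"
      by (simp add: algebra_simps)
    also have "norm \<dots> \<le> (1 - s) * norm x0 + s * norm (x0 + w)"
      using s by (smt (verit) norm_scaleR norm_triangle_ineq)
    finally have "s * norm x0 \<le> s * norm (x0 + w)" by (simp add: algebra_simps)
    then show ?thesis using s unfolding x0_def[symmetric] w_def[symmetric] by simp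
  qed
qed

lemma remove:
  fixes sc :: "'k::real_normed_field \<Rightarrow> 'a::banach \<Rightarrow> 'a"
  assumes vs: "vector_space sc" and rs: "\<forall>r x. sc (of_real r) x = scaleR r x"
    and sb: "schauder_basis sc e" and cw: "Cw_one sc e" and F: "finite F"
  shows "finite D \<Longrightarrow> D \<subseteq> F \<Longrightarrow> norm (\<Sum>j\<in>F - D. sc (a j) (e j)) \<le> norm (\<Sum>j\<in>F. sc (a j) (e j))"
proof (induction D rule: finite_induct)
  case (insert k D)
  define g where "g = (\<lambda>j. sc (a j) (e j))"
  have kin: "k \<in> F - D" using insert by auto
  have fin: "finite (F - D)" using F by simp
  have eqs: "F - insert k D = (F - D) - {k}" by auto
  have "sum g (F - D) = g k + sum g ((F - D) - {k})"
    by (rule sum.remove[OF fin kin])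
  then have e1: "sum g (F - D) = sum g (F - insert k D) + g k"
    unfolding eqs by (simp only: add.commute)
  have e2: "norm (sum g (F - insert k D)) \<le> norm (sum g (F - insert k D) + g k)"
    unfolding g_def by (rule step[OF vs rs sb cw]) (use F in auto)
  have e3: "norm (sum g (F - D)) \<le> norm (sum g F)"
    using insert.IH insert.prems unfolding g_def by blast
  have e4: "norm (sum g (F - insert k D) + g k) \<le> norm (sum g F)"
    using e1 e3 by (simp only:)
  show ?case using order_trans[OF e2 e4] unfolding g_def .
qed simp

lemma subset_norm:
  fixes sc :: "'k::real_normed_field \<Rightarrow> 'a::banach \<Rightarrow> 'a"
  assumes vs: "vector_space sc" and rs: "\<forall>r x. sc (of_real r) x = scaleR r x"
    and sb: "schauder_basis sc e" and cw: "Cw_one sc e" and G: "finite G" and FG: "F \<subseteq> G"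
  shows "norm (\<Sum>j\<in>F. sc (a j) (e j)) \<le> norm (\<Sum>j\<in>G. sc (a j) (e j))"
proof -
  have "G - (G - F) = F" using FG by auto
  then show ?thesis using remove[OF vs rs sb cw G, of "G - F" a] G by simp
qed

lemma main:
  fixes sc :: "'k::real_normed_field \<Rightarrow> 'a::banach \<Rightarrow> 'a"
  assumes vs: "vector_space sc" and rs: "\<forall>r x. sc (of_real r) x = scaleR r x"
    and sb: "schauder_basis sc e"
  shows "Cw_one sc e \<longleftrightarrow> Ksu_one sc e"
proof
  assume K: "Ksu_one sc e"
  show "Cw_one sc e" unfolding Cw_one_def
  proof (intro allI impI)
    fix x N A assume gs: "greedy_set sc e x N A"
    then have A: "finite A" by (simp add: greedy_set_def)
    obtain M where M: "A \<subseteq> {..<M}" using A finite_nat_bounded by blast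
    have "(\<lambda>N. \<Sum>n\<in>A \<inter> {..<N}. sc (coord sc e n x) (e n)) \<longlonglongrightarrow> greedy_op sc e A x"
    proof (rule tendsto_eventually)
      show "eventually (\<lambda>N. (\<Sum>n\<in>A \<inter> {..<N}. sc (coord sc e n x) (e n)) = greedy_op sc e A x) sequentially"
        unfolding eventually_sequentially greedy_op_def
      proof (intro exI allI impI)
        fix N assume "M \<le> N"
        then have "A \<inter> {..<N} = A" using M by auto
        then show "(\<Sum>n\<in>A \<inter> {..<N}. sc (coord sc e n x) (e n)) = (\<Sum>j\<in>A. sc (coord sc e j x) (e j))" by simp
      qed
    qed
    then have "coord_proj sc e A x = greedy_op sc e A x"
      unfolding coord_proj_def by (rule limI)
    then show "norm (greedy_op sc e A x) \<le> norm x" using K unfolding Ksu_one_def by metis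
  qed
next
  assume cw: "Cw_one sc e"
  interpret v: vector_space sc by (rule vs)
  note sub = subset_norm[OF vs rs sb cw]
  have conv: "(\<lambda>N. \<Sum>n<N. sc (coord sc e n x) (e n)) \<longlonglongrightarrow> x" for x
  proof -
    have ex: "\<exists>!a. (\<lambda>N. \<Sum>n<N. sc (a n) (e n)) \<longlonglongrightarrow> x" using sb unfolding schauder_basis_def by blast
    have "(\<lambda>N. \<Sum>n<N. sc ((THE a. (\<lambda>N. \<Sum>n<N. sc (a n) (e n)) \<longlonglongrightarrow> x) n) (e n)) \<longlonglongrightarrow> x"
      using theI'[OF ex] .
    then show ?thesis unfolding coord_def .
  qed
  have tail: "norm (\<Sum>n\<in>F. sc (coord sc e n x) (e n)) \<le> norm ((\<Sum>n<M. sc (coord sc e n x) (e n)) - (\<Sum>n<N. sc (coord sc e n x) (e n)))"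
    if "F \<subseteq> {N..<M}" for F N M x
  proof -
    have "N \<le> M \<or> F = {}" using that by auto
    then show ?thesis
    proof
      assume NM: "N \<le> M"
      define h where "h = (\<lambda>n. sc (coord sc e n x) (e n))"
      have "sum h {0..<N} + sum h {N..<M} = sum h {0..<M}"
        using NM by (intro sum.atLeastLessThan_concat) auto
      then have "sum h {..<M} - sum h {..<N} = sum h {N..<M}"
        by (simp add: atLeast0LessThan algebra_simps)
      then have "(\<Sum>n<M. sc (coord sc e n x) (e n)) - (\<Sum>n<N. sc (coord sc e n x) (e n)) = (\<Sum>n\<in>{N..<M}. sc (coord sc e n x) (e n))"
        by (simp add: h_def)
      then show ?thesis using sub[of "{N..<M}" F] that by simp
    qed simp
  qed
  have unc: "unconditional_basis sc e" unfolding unconditional_basis_def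
  proof (intro allI impI)
    fix x and \<pi> :: "nat \<Rightarrow> nat" assume bij: "bij \<pi>"
    define g where "g = (\<lambda>n. sc (coord sc e n x) (e n))"
    define S where "S = (\<lambda>N. \<Sum>n<N. g n)"
    have S: "S \<longlonglongrightarrow> x" using conv[of x] by (simp add: S_def g_def)
    show "(\<lambda>N. \<Sum>n<N. sc (coord sc e (\<pi> n) x) (e (\<pi> n))) \<longlonglongrightarrow> x"
      unfolding LIMSEQ_def
    proof (intro allI impI)
      fix r :: real assume r: "r > 0"
      obtain N where N: "\<And>M. M \<ge> N \<Longrightarrow> dist (S M) x < r / 3"
        using S r unfolding LIMSEQ_def by (meson divide_pos_pos zero_less_numeral)
      define K0 where "K0 = Suc (Max (inv \<pi> ` {..<N}))"
      show "\<exists>K0. \<forall>K\<ge>K0. dist (\<Sum>n<K. sc (coord sc e (\<pi> n) x) (e (\<pi> n))) x < r"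
      proof (intro exI allI impI)
        fix K assume K: "K0 \<le> K"
        define F where "F = \<pi> ` {..<K}"
        have Ffin: "finite F" by (simp add: F_def)
        have NF: "{..<N} \<subseteq> F"
        proof
          fix m assume m: "m \<in> {..<N}"
          have "inv \<pi> m \<le> Max (inv \<pi> ` {..<N})" using m by auto
          then have "inv \<pi> m < K" using K unfolding K0_def by auto
          moreover have "\<pi> (inv \<pi> m) = m" using bij by (meson bij_inv_eq_iff)
          ultimately show "m \<in> F" unfolding F_def by (metis image_eqI lessThan_iff)
        qed
        obtain M where M: "F \<subseteq> {..<M}" using Ffin finite_nat_bounded by blast
        have MN: "N \<le> M" using NF M
          by (metis lessThan_subset_iff order_trans)
        have sumF: "(\<Sum>n<K. sc (coord sc e (\<pi> n) x) (e (\<pi> n))) = sum g F"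
          unfolding F_def g_def using sum.reindex[OF inj_on_subset[OF bij_is_inj[OF bij] subset_UNIV], of "\<lambda>n. sc (coord sc e n x) (e n)" "{..<K}"] by simp
        have "sum g F = S N + sum g (F - {..<N})"
          unfolding S_def by (simp add: sum.subset_diff[OF NF Ffin] add.commute)
        moreover have "norm (sum g (F - {..<N})) \<le> norm (S M - S N)"
          unfolding g_def S_def by (rule tail) (use M in auto)
        moreover have "norm (S M - S N) < 2 * r / 3"
          using norm_diff_triangle_less[of "S M" x "r/3" "S N" "r/3"] N[of M] N[of N] MN by (simp add: dist_norm norm_minus_commute)
        moreover have "norm (S N - x) < r / 3" using N[of N] by (simp add: dist_norm)
        ultimately have "norm (sum g (F - {..<N}) + (S N - x)) < r"
          by (intro norm_triangle_lt) linarith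
        moreover have "sum g F - x = sum g (F - {..<N}) + (S N - x)" using \<open>sum g F = _\<close> by simp
        ultimately have "norm (sum g F - x) < r" by (simp add: algebra_simps)
        then show "dist (\<Sum>n<K. sc (coord sc e (\<pi> n) x) (e (\<pi> n))) x < r"
          using sumF by (simp add: dist_norm)
      qed
    qed
  qed
  have proj: "norm (coord_proj sc e A x) \<le> norm x" for A x
  proof -
    define g where "g = (\<lambda>n. sc (coord sc e n x) (e n))"
    define S where "S = (\<lambda>N. \<Sum>n<N. g n)"
    define T where "T = (\<lambda>N. \<Sum>n\<in>A \<inter> {..<N}. g n)"
    have S: "S \<longlonglongrightarrow> x" using conv[of x] by (simp add: S_def g_def)
    have "Cauchy S" using S LIMSEQ_imp_Cauchy by blast
    have "Cauchy T"
      unfolding Cauchy_def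
    proof (intro allI impI)
      fix r :: real assume r: "r > 0"
      obtain M0 where M0: "\<And>m n. m \<ge> M0 \<Longrightarrow> n \<ge> M0 \<Longrightarrow> dist (S m) (S n) < r"
        using \<open>Cauchy S\<close> r unfolding Cauchy_def by blast
      have "dist (T m) (T n) < r" if "m \<ge> M0" "n \<ge> M0" for m n
      proof -
        have *: "dist (T m) (T n) < r" if mn: "n \<le> m" "m \<ge> M0" "n \<ge> M0" for m n
        proof -
          have "A \<inter> {..<n} \<subseteq> A \<inter> {..<m}" using mn by auto
          then have "T m = T n + sum g (A \<inter> {..<m} - A \<inter> {..<n})"
            unfolding T_def by (simp add: sum.subset_diff[OF \<open>A \<inter> {..<n} \<subseteq> A \<inter> {..<m}\<close>] add.commute)
          moreover have "norm (sum g (A \<inter> {..<m} - A \<inter> {..<n})) \<le> norm (S m - S n)"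
            unfolding g_def S_def by (rule tail) auto
          ultimately show ?thesis using M0[OF mn(2,3)] by (simp add: dist_norm)
        qed
        show ?thesis using *[of m n] *[of n m] that by (metis dist_commute nat_le_linear)
      qed
      then show "\<exists>M. \<forall>m\<ge>M. \<forall>n\<ge>M. dist (T m) (T n) < r" by blast
    qed
    then have "convergent T" by (simp add: Cauchy_convergent_iff)
    then have T: "T \<longlonglongrightarrow> lim T" by (simp add: convergent_LIMSEQ_iff)
    have "norm (T N) \<le> norm (S N)" for N
      unfolding T_def S_def g_def by (rule sub) auto
    then have "norm (lim T) \<le> norm x"
      by (intro LIMSEQ_le[OF tendsto_norm[OF T] tendsto_norm[OF S]]) auto
    then show ?thesis unfolding coord_proj_def T_def g_def .
  qed
  show "Ksu_one sc e" unfolding Ksu_one_def using unc proj by blast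
qed

theorem theorem2p1:
  fixes e :: "nat \<Rightarrow> 'a::banach"
    and sc :: "complex \<Rightarrow> 'b::banach \<Rightarrow> 'b" and f :: "nat \<Rightarrow> 'b"
  shows "(infinite_dimensional (scaleR :: real \<Rightarrow> 'a \<Rightarrow> 'a) \<and> schauder_basis scaleR e \<and> semi_normalized e
            \<and> quasi_greedy scaleR e
          \<longrightarrow> (Cw_one scaleR e \<longleftrightarrow> Ksu_one scaleR e))
       \<and> (complex_banach_scale sc \<and> infinite_dimensional sc
            \<and> schauder_basis sc f \<and> semi_normalized f \<and> quasi_greedy sc f
          \<longrightarrow> (Cw_one sc f \<longleftrightarrow> Ksu_one sc f))"
proof (intro conjI impI)
  assume h: "infinite_dimensional (scaleR :: real \<Rightarrow> 'a \<Rightarrow> 'a) \<and> schauder_basis scaleR e \<and> semi_normalized e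
            \<and> quasi_greedy scaleR e"
  have vs: "vector_space (scaleR :: real \<Rightarrow> 'a \<Rightarrow> 'a)" by (rule real_vector.vector_space_axioms)
  have rs: "\<forall>r (x::'a). scaleR (of_real r) x = scaleR r x" by simp
  show "Cw_one scaleR e \<longleftrightarrow> Ksu_one scaleR e"
    using main[OF vs rs] h by blast
next
  assume h: "complex_banach_scale sc \<and> infinite_dimensional sc
            \<and> schauder_basis sc f \<and> semi_normalized f \<and> quasi_greedy sc f"
  show "Cw_one sc f \<longleftrightarrow> Ksu_one sc f"
  proof (rule main)
    show "vector_space sc" using h unfolding complex_banach_scale_def by blast
    show "\<forall>r x. sc (of_real r) x = scaleR r x" using h unfolding complex_banach_scale_def by blast
    show "schauder_basis sc f" using h by blast
  qed
qed

end
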